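(* Let $R$ be a ring and $T$ a left denominator set of $R$ with $\mathrm{ass}(T)=0$ such that $T^{-1}R=R_1\times\cdots\times R_n$ is a direct product of left localization maximal rings $R_1,\ldots,R_n$. Let $\tau:R\to T^{-1}R$, $r\mapsto\frac{r}{1}=(r_1,\ldots,r_n)$. For $i=1,\ldots,n$ put $S_i:=R_1\times\cdots\times R_i^*\times\cdots\times R_n$ (with $R_i^*$ the group of units of $R_i$ in the $i$-th place) and $T_i:=\tau^{-1}(S_i)$. Then $\max\mathrm{Den}_l(R)=\{T_1,\ldots,T_n\}$ and $T_i^{-1}R\cong R_i$ for each $i$.
   Context: All rings are associative with $1$. A multiplicative subset $S$ of $R$ ($1\in S$, $0\notin S$, closed under multiplication) is a left Ore set if $Sr\cap Rs\neq\emptyset$ for all $r\in R$, $s\in S$; for it, $\mathrm{ass}(S):=\{r\in R: sr=0\text{ for some } s\in S\}$. A left Ore set $S$ is a left denominator set if $rs=0$ ($r\in R$, $s\in S$) implies $tr=0$ for some $t\in S$. $\mathrm{Den}_l(R)$ is the set of left denominator sets, $S^{-1}R$ the left localization, $\max\mathrm{Den}_l(R)$ the set of maximal elements of $(\mathrm{Den}_l(R),\subseteq)$. For a ring $A$, $S_0(A)$ is the largest left Ore set of $A$ consisting of regular elements and $Q_l(A):=S_0(A)^{-1}A$. A ring $A$ is a left localization maximal ring if $A=Q_l(A)$ (i.e. $S_0(A)$ consists of units) and $\{\mathrm{ass}(S):S\in\mathrm{Den}_l(A)\}=\{0\}$. *)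

theory Defs
  imports "HOL-Algebra.Ring" "HOL-Algebra.RingHom"
begin

definition mult_subset :: "('a, 'm) ring_scheme \<Rightarrow> 'a set \<Rightarrow> bool" where
  "mult_subset R S \<longleftrightarrow> S \<subseteq> carrier R \<and> \<one>\<^bsub>R\<^esub> \<in> S \<and> \<zero>\<^bsub>R\<^esub> \<notin> S
     \<and> (\<forall>s\<in>S. \<forall>t\<in>S. s \<otimes>\<^bsub>R\<^esub> t \<in> S)"

definition left_ore :: "('a, 'm) ring_scheme \<Rightarrow> 'a set \<Rightarrow> bool" where
  "left_ore R S \<longleftrightarrow> mult_subset R S \<and>
     (\<forall>r\<in>carrier R. \<forall>s\<in>S. \<exists>s'\<in>S. \<exists>r'\<in>carrier R. s' \<otimes>\<^bsub>R\<^esub> r = r' \<otimes>\<^bsub>R\<^esub> s)"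

definition ass :: "('a, 'm) ring_scheme \<Rightarrow> 'a set \<Rightarrow> 'a set" where
  "ass R S = {r \<in> carrier R. \<exists>s\<in>S. s \<otimes>\<^bsub>R\<^esub> r = \<zero>\<^bsub>R\<^esub>}"

definition left_den :: "('a, 'm) ring_scheme \<Rightarrow> 'a set \<Rightarrow> bool" where
  "left_den R S \<longleftrightarrow> left_ore R S \<and>
     (\<forall>r\<in>carrier R. \<forall>s\<in>S. r \<otimes>\<^bsub>R\<^esub> s = \<zero>\<^bsub>R\<^esub> \<longrightarrow> (\<exists>t\<in>S. t \<otimes>\<^bsub>R\<^esub> r = \<zero>\<^bsub>R\<^esub>))"

definition Den_l :: "('a, 'm) ring_scheme \<Rightarrow> 'a set set" where
  "Den_l R = {S. left_den R S}"

definition maxDen_l :: "('a, 'm) ring_scheme \<Rightarrow> 'a set set" where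
  "maxDen_l R = {S \<in> Den_l R. \<forall>S'\<in>Den_l R. S \<subseteq> S' \<longrightarrow> S' = S}"

text \<open>\<open>is_left_loc R S Q \<sigma>\<close>: \<open>(Q, \<sigma>)\<close> is the left localization \<open>S\<^sup>-\<^sup>1R\<close> with
  canonical map \<open>\<sigma>(r) = r/1\<close> (characterization of the left ring of fractions:
  \<open>\<sigma>\<close> is a ring homomorphism inverting \<open>S\<close>, every element is \<open>\<sigma>(s)\<^sup>-\<^sup>1\<sigma>(r)\<close>,
  and \<open>ker \<sigma> = ass(S)\<close>).  Since this determines \<open>Q\<close> up to isomorphism,
  \<open>S\<^sup>-\<^sup>1R \<cong> A\<close> means \<open>\<exists>\<sigma>. is_left_loc R S A \<sigma>\<close>.\<close>
definition is_left_loc ::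
  "('a, 'm) ring_scheme \<Rightarrow> 'a set \<Rightarrow> ('b, 'n) ring_scheme \<Rightarrow> ('a \<Rightarrow> 'b) \<Rightarrow> bool" where
  "is_left_loc R S Q \<sigma> \<longleftrightarrow> ring Q \<and> \<sigma> \<in> ring_hom R Q \<and> \<sigma> ` S \<subseteq> Units Q \<and>
     (\<forall>q\<in>carrier Q. \<exists>s\<in>S. \<exists>r\<in>carrier R. q = inv\<^bsub>Q\<^esub> (\<sigma> s) \<otimes>\<^bsub>Q\<^esub> \<sigma> r) \<and>
     (\<forall>r\<in>carrier R. \<sigma> r = \<zero>\<^bsub>Q\<^esub> \<longleftrightarrow> r \<in> ass R S)"

definition regular_elems :: "('a, 'm) ring_scheme \<Rightarrow> 'a set" where
  "regular_elems A = {a \<in> carrier A. \<forall>b\<in>carrier A.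
      (a \<otimes>\<^bsub>A\<^esub> b = \<zero>\<^bsub>A\<^esub> \<longrightarrow> b = \<zero>\<^bsub>A\<^esub>) \<and> (b \<otimes>\<^bsub>A\<^esub> a = \<zero>\<^bsub>A\<^esub> \<longrightarrow> b = \<zero>\<^bsub>A\<^esub>)}"

definition S0 :: "('a, 'm) ring_scheme \<Rightarrow> 'a set" where
  "S0 A = (THE S. left_ore A S \<and> S \<subseteq> regular_elems A \<and>
     (\<forall>S'. left_ore A S' \<and> S' \<subseteq> regular_elems A \<longrightarrow> S' \<subseteq> S))"

definition left_loc_max_ring :: "('a, 'm) ring_scheme \<Rightarrow> bool" where
  "left_loc_max_ring A \<longleftrightarrow> ring A \<and> S0 A \<subseteq> Units A \<and>
     {ass A S | S. S \<in> Den_l A} = {{\<zero>\<^bsub>A\<^esub>}}"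

definition prod_ring :: "'i set \<Rightarrow> ('i \<Rightarrow> ('b, 'n) ring_scheme) \<Rightarrow> ('i \<Rightarrow> 'b) ring" where
  "prod_ring I Rs = \<lparr> carrier = (\<Pi>\<^sub>E i\<in>I. carrier (Rs i)),
     monoid.mult = (\<lambda>x y. \<lambda>i\<in>I. x i \<otimes>\<^bsub>Rs i\<^esub> y i),
     one = (\<lambda>i\<in>I. \<one>\<^bsub>Rs i\<^esub>),
     zero = (\<lambda>i\<in>I. \<zero>\<^bsub>Rs i\<^esub>),
     add = (\<lambda>x y. \<lambda>i\<in>I. x i \<oplus>\<^bsub>Rs i\<^esub> y i) \<rparr>"

end

theory Submission
  imports Defs
begin



inductive_set mgen :: "('a,'m) ring_scheme \<Rightarrow> 'a set \<Rightarrow> 'a set" for A G where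
  mg_one: "\<one>\<^bsub>A\<^esub> \<in> mgen A G"
| mg_step: "g \<in> G \<Longrightarrow> x \<in> mgen A G \<Longrightarrow> g \<otimes>\<^bsub>A\<^esub> x \<in> mgen A G"

context ring begin

lemma mgen_carrier: "G \<subseteq> carrier R \<Longrightarrow> mgen R G \<subseteq> carrier R"
proof
  fix x assume G: "G \<subseteq> carrier R" and x: "x \<in> mgen R G"
  from x show "x \<in> carrier R" by induct (use G in auto)
qed

lemma mgen_mult: assumes G: "G \<subseteq> carrier R" and x: "x \<in> mgen R G" and y: "y \<in> mgen R G"
  shows "x \<otimes> y \<in> mgen R G"
  using x
proof induct
  case mg_one then show ?case using y mgen_carrier[OF G] by auto
next
  case (mg_step g x)
  have c: "g \<in> carrier R" "x \<in> carrier R" "y \<in> carrier R"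
    using mg_step(1,2) G y mgen_carrier[OF G] by auto
  have "g \<otimes> x \<otimes> y = g \<otimes> (x \<otimes> y)"
    using c by (simp add: m_assoc)
  then show ?case using mg_step by (auto intro: mgen.mg_step)
qed

lemma mgen_gen: "G \<subseteq> carrier R \<Longrightarrow> G \<subseteq> mgen R G"
proof
  fix g assume "G \<subseteq> carrier R" "g \<in> G"
  then have "g \<otimes> \<one> \<in> mgen R G" by (auto intro: mgen.intros)
  then show "g \<in> mgen R G" using \<open>G \<subseteq> carrier R\<close> \<open>g \<in> G\<close> by auto
qed

lemma mgen_ore:
  assumes G: "G \<subseteq> carrier R"
    and gen: "\<forall>g\<in>G. \<forall>r\<in>carrier R. \<exists>s'\<in>mgen R G. \<exists>r'\<in>carrier R. s' \<otimes> r = r' \<otimes> g"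
    and p: "p \<in> mgen R G"
  shows "\<forall>r\<in>carrier R. \<exists>s'\<in>mgen R G. \<exists>r'\<in>carrier R. s' \<otimes> r = r' \<otimes> p"
  using p
proof induct
  case mg_one
  show ?case
  proof
    fix r assume r: "r \<in> carrier R"
    have "\<one> \<otimes> r = r \<otimes> \<one>" using r by simp
    then show "\<exists>s'\<in>mgen R G. \<exists>r'\<in>carrier R. s' \<otimes> r = r' \<otimes> \<one>"
      using r mgen.mg_one by blast
  qed
next
  case (mg_step g x)
  show ?case
  proof
    fix r assume r: "r \<in> carrier R"
    obtain s1 r1 where s1: "s1 \<in> mgen R G" "r1 \<in> carrier R" "s1 \<otimes> r = r1 \<otimes> x"
      using mg_step(3) r by blast
    obtain s2 r2 where s2: "s2 \<in> mgen R G" "r2 \<in> carrier R" "s2 \<otimes> r1 = r2 \<otimes> g"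
      using gen mg_step(1) s1(2) by blast
    have c: "s1 \<in> carrier R" "s2 \<in> carrier R" "x \<in> carrier R" "g \<in> carrier R"
      using subsetD[OF mgen_carrier[OF G]] s1(1) s2(1) mg_step(2) subsetD[OF G mg_step(1)] by auto
    have "(s2 \<otimes> s1) \<otimes> r = r2 \<otimes> (g \<otimes> x)"
    proof -
      have "(s2 \<otimes> s1) \<otimes> r = s2 \<otimes> (r1 \<otimes> x)" using c r s1 by (simp add: m_assoc)
      also have "\<dots> = (s2 \<otimes> r1) \<otimes> x" using c s1 by (simp add: m_assoc)
      also have "\<dots> = r2 \<otimes> (g \<otimes> x)" using c s2 by (simp add: m_assoc)
      finally show ?thesis .
    qed
    then show "\<exists>s'\<in>mgen R G. \<exists>r'\<in>carrier R. s' \<otimes> r = r' \<otimes> (g \<otimes> x)"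
      using mgen_mult[OF G s2(1) s1(1)] s2(2) by blast
  qed
qed

lemma mgen_den:
  assumes G: "G \<subseteq> carrier R" and W: "W \<subseteq> carrier R" "\<forall>a\<in>W. \<forall>b\<in>W. a \<otimes> b \<in> W" "\<one> \<in> W"
    and gen: "\<forall>g\<in>G. \<forall>r\<in>carrier R. r \<otimes> g = \<zero> \<longrightarrow> (\<exists>w\<in>W. w \<otimes> r = \<zero>)"
    and p: "p \<in> mgen R G"
  shows "\<forall>r\<in>carrier R. r \<otimes> p = \<zero> \<longrightarrow> (\<exists>w\<in>W. w \<otimes> r = \<zero>)"
  using p
proof induct
  case mg_one
  show ?case
  proof (intro ballI impI)
    fix r assume r: "r \<in> carrier R" and "r \<otimes> \<one> = \<zero>"
    then have "\<one> \<otimes> r = \<zero>" by simp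
    then show "\<exists>w\<in>W. w \<otimes> r = \<zero>" using W(3) by blast
  qed
next
  case (mg_step g x)
  show ?case
  proof (intro ballI impI)
    fix r assume r: "r \<in> carrier R" and z: "r \<otimes> (g \<otimes> x) = \<zero>"
    have c: "x \<in> carrier R" "g \<in> carrier R" using subsetD[OF mgen_carrier[OF G] mg_step(2)] subsetD[OF G mg_step(1)] by auto
    have "(r \<otimes> g) \<otimes> x = \<zero>" using z c r by (simp add: m_assoc)
    then obtain w1 where w1: "w1 \<in> W" "w1 \<otimes> (r \<otimes> g) = \<zero>" using mg_step(3) r c by blast
    have w1c: "w1 \<in> carrier R" using W(1) w1(1) by blast
    have "(w1 \<otimes> r) \<otimes> g = \<zero>" using w1(2) w1c c r by (simp add: m_assoc)
    moreover have "w1 \<otimes> r \<in> carrier R" using w1c r by simp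
    ultimately obtain w2 where w2: "w2 \<in> W" "w2 \<otimes> (w1 \<otimes> r) = \<zero>" using gen mg_step(1) by blast
    have w2c: "w2 \<in> carrier R" using W(1) w2(1) by blast
    have "(w2 \<otimes> w1) \<otimes> r = \<zero>" using w2(2) w1c w2c r by (simp add: m_assoc)
    moreover have "w2 \<otimes> w1 \<in> W" using W(2) w1(1) w2(1) by blast
    ultimately show "\<exists>w\<in>W. w \<otimes> r = \<zero>" by blast
  qed
qed

lemma regular_elemsD:
  assumes "a \<in> regular_elems R"
  shows "a \<in> carrier R" "\<And>c. c \<in> carrier R \<Longrightarrow> a \<otimes> c = \<zero> \<Longrightarrow> c = \<zero>"
    "\<And>c. c \<in> carrier R \<Longrightarrow> c \<otimes> a = \<zero> \<Longrightarrow> c = \<zero>"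
  using assms unfolding regular_elems_def by blast+

lemma regular_elemsI:
  assumes "a \<in> carrier R" "\<And>c. c \<in> carrier R \<Longrightarrow> a \<otimes> c = \<zero> \<Longrightarrow> c = \<zero>"
    "\<And>c. c \<in> carrier R \<Longrightarrow> c \<otimes> a = \<zero> \<Longrightarrow> c = \<zero>"
  shows "a \<in> regular_elems R"
  using assms unfolding regular_elems_def by blast

lemma regular_mult: "a \<in> regular_elems R \<Longrightarrow> b \<in> regular_elems R \<Longrightarrow> a \<otimes> b \<in> regular_elems R"
proof -
  assume a: "a \<in> regular_elems R" and b: "b \<in> regular_elems R"
  note ar = regular_elemsD[OF a] and br = regular_elemsD[OF b]
  show ?thesis
  proof (rule regular_elemsI)
    show "a \<otimes> b \<in> carrier R" using ar(1) br(1) by simp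
    fix c assume c: "c \<in> carrier R"
    { assume "a \<otimes> b \<otimes> c = \<zero>"
      then have "a \<otimes> (b \<otimes> c) = \<zero>" using ar(1) br(1) c by (simp add: m_assoc)
      then have "b \<otimes> c = \<zero>" using ar(2) br(1) c by simp
      then show "c = \<zero>" using br(2) c by simp }
    { assume "c \<otimes> (a \<otimes> b) = \<zero>"
      then have "(c \<otimes> a) \<otimes> b = \<zero>" using ar(1) br(1) c by (simp add: m_assoc)
      then have "c \<otimes> a = \<zero>" using br(3) ar(1) c by simp
      then show "c = \<zero>" using ar(3) c by simp }
  qed
qed

lemma S0_largest:
  assumes D: "left_ore R D" "D \<subseteq> regular_elems R"
  shows "D \<subseteq> S0 R"
proof -
  define U where "U = \<Union>{D. left_ore R D \<and> D \<subseteq> regular_elems R}"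
  define M where "M = mgen R U"
  have Ureg: "U \<subseteq> regular_elems R" unfolding U_def by auto
  have Uc: "U \<subseteq> carrier R" using Ureg unfolding regular_elems_def by auto
  have Mreg: "M \<subseteq> regular_elems R"
  proof
    fix x assume "x \<in> M" then show "x \<in> regular_elems R" unfolding M_def
    proof induct
      case mg_one then show ?case unfolding regular_elems_def by auto
    next
      case (mg_step g x) then show ?case using Ureg regular_mult by auto
    qed
  qed
  have oz: "\<one> \<noteq> \<zero>" using D(1) unfolding left_ore_def mult_subset_def by auto
  have "\<zero> \<notin> regular_elems R" using oz unfolding regular_elems_def by force
  then have z: "\<zero> \<notin> M" using Mreg by auto
  have Mc: "M \<subseteq> carrier R" using Mreg unfolding regular_elems_def by auto
  have ore: "left_ore R M"
    unfolding left_ore_def mult_subset_def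
  proof (intro conjI)
    show "M \<subseteq> carrier R" by fact
    show "\<one> \<in> M" unfolding M_def by (rule mg_one)
    show "\<zero> \<notin> M" by fact
    show "\<forall>s\<in>M. \<forall>t\<in>M. s \<otimes> t \<in> M" unfolding M_def using mgen_mult[OF Uc] by blast
    have gen: "\<forall>g\<in>U. \<forall>r\<in>carrier R. \<exists>s'\<in>mgen R U. \<exists>r'\<in>carrier R. s' \<otimes> r = r' \<otimes> g"
    proof (intro ballI)
      fix g r assume g: "g \<in> U" and r: "r \<in> carrier R"
      then obtain D' where D': "left_ore R D'" "D' \<subseteq> regular_elems R" "g \<in> D'" unfolding U_def by auto
      then obtain s' r' where "s' \<in> D'" "r' \<in> carrier R" "s' \<otimes> r = r' \<otimes> g"
        using r unfolding left_ore_def by blast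
      moreover have "s' \<in> U" using D' \<open>s' \<in> D'\<close> unfolding U_def by auto
      ultimately show "\<exists>s'\<in>mgen R U. \<exists>r'\<in>carrier R. s' \<otimes> r = r' \<otimes> g"
        using mgen_gen[OF Uc] by blast
    qed
    show "\<forall>r\<in>carrier R. \<forall>s\<in>M. \<exists>s'\<in>M. \<exists>r'\<in>carrier R. s' \<otimes> r = r' \<otimes> s"
      using mgen_ore[OF Uc gen] unfolding M_def by blast
  qed
  have big: "\<forall>S'. left_ore R S' \<and> S' \<subseteq> regular_elems R \<longrightarrow> S' \<subseteq> M"
    using mgen_gen[OF Uc] unfolding M_def U_def by blast
  have "S0 R = M"
    unfolding S0_def
  proof (rule the_equality)
    show "left_ore R M \<and> M \<subseteq> regular_elems R \<and> (\<forall>S'. left_ore R S' \<and> S' \<subseteq> regular_elems R \<longrightarrow> S' \<subseteq> M)"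
      using ore Mreg big by blast
    fix S assume "left_ore R S \<and> S \<subseteq> regular_elems R \<and> (\<forall>S'. left_ore R S' \<and> S' \<subseteq> regular_elems R \<longrightarrow> S' \<subseteq> S)"
    then show "S = M" using ore Mreg big by blast
  qed
  moreover have "D \<subseteq> M" using big D by blast
  ultimately show ?thesis by simp
qed

end



lemma prod_ring_carrier: "carrier (prod_ring I Rs) = (\<Pi>\<^sub>E i\<in>I. carrier (Rs i))"
  by (simp add: prod_ring_def)
lemma prod_ring_mult: "i \<in> I \<Longrightarrow> (x \<otimes>\<^bsub>prod_ring I Rs\<^esub> y) i = x i \<otimes>\<^bsub>Rs i\<^esub> y i"
  by (simp add: prod_ring_def)
lemma prod_ring_add: "i \<in> I \<Longrightarrow> (x \<oplus>\<^bsub>prod_ring I Rs\<^esub> y) i = x i \<oplus>\<^bsub>Rs i\<^esub> y i"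
  by (simp add: prod_ring_def)
lemma prod_ring_one: "i \<in> I \<Longrightarrow> \<one>\<^bsub>prod_ring I Rs\<^esub> i = \<one>\<^bsub>Rs i\<^esub>"
  by (simp add: prod_ring_def)
lemma prod_ring_zero: "i \<in> I \<Longrightarrow> \<zero>\<^bsub>prod_ring I Rs\<^esub> i = \<zero>\<^bsub>Rs i\<^esub>"
  by (simp add: prod_ring_def)

locale tctx =
  fixes R :: "('a,'m) ring_scheme" (structure) and T :: "'a set" and n :: nat
    and Rs :: "nat \<Rightarrow> ('b,'k) ring_scheme" and \<tau> :: "'a \<Rightarrow> nat \<Rightarrow> 'b"
  assumes Rring: "ring R" and TD: "T \<in> Den_l R" and assT: "ass R T = {\<zero>}"
    and Rmax: "\<forall>i<n. left_loc_max_ring (Rs i)"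
    and loc: "is_left_loc R T (prod_ring {..<n} Rs) \<tau>"

sublocale tctx \<subseteq> ring R by (rule Rring)

context tctx begin

abbreviation "Q \<equiv> prod_ring {..<n} Rs"

definition Ti :: "nat \<Rightarrow> 'a set" where
  "Ti i = {r \<in> carrier R. \<tau> r \<in> {x \<in> carrier Q. x i \<in> Units (Rs i)}}"

lemma Qring: "ring Q" using loc unfolding is_left_loc_def by blast
lemma hom: "\<tau> \<in> ring_hom R Q" using loc unfolding is_left_loc_def by blast
lemma Tunit: "t \<in> T \<Longrightarrow> \<tau> t \<in> Units Q" using loc unfolding is_left_loc_def by blast
lemma Qdec: "q \<in> carrier Q \<Longrightarrow> \<exists>s\<in>T. \<exists>r\<in>carrier R. q = inv\<^bsub>Q\<^esub> (\<tau> s) \<otimes>\<^bsub>Q\<^esub> \<tau> r"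
  using loc unfolding is_left_loc_def by blast
lemma kerT: "r \<in> carrier R \<Longrightarrow> \<tau> r = \<zero>\<^bsub>Q\<^esub> \<Longrightarrow> r = \<zero>"
  using loc assT unfolding is_left_loc_def by blast

lemma Tden: "left_den R T" using TD unfolding Den_l_def by simp
lemma Tc: "T \<subseteq> carrier R" and T1: "\<one> \<in> T" and T0: "\<zero> \<notin> T"
  and Tmul: "s \<in> T \<Longrightarrow> t \<in> T \<Longrightarrow> s \<otimes> t \<in> T"
  using Tden unfolding left_den_def left_ore_def mult_subset_def by blast+

lemma ringRs: "i < n \<Longrightarrow> ring (Rs i)" using Rmax unfolding left_loc_max_ring_def by blast

lemma Rs_nz: assumes "i < n" shows "\<one>\<^bsub>Rs i\<^esub> \<noteq> \<zero>\<^bsub>Rs i\<^esub>"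
proof -
  have "{ass (Rs i) S | S. S \<in> Den_l (Rs i)} = {{\<zero>\<^bsub>Rs i\<^esub>}}"
    using Rmax assms unfolding left_loc_max_ring_def by blast
  then obtain S where "S \<in> Den_l (Rs i)" by blast
  then show ?thesis unfolding Den_l_def left_den_def left_ore_def mult_subset_def by auto
qed

lemma zero_nonunit: assumes i: "i < n" shows "\<zero>\<^bsub>Rs i\<^esub> \<notin> Units (Rs i)"
proof
  interpret Ri: ring "Rs i" using ringRs[OF i] .
  assume "\<zero>\<^bsub>Rs i\<^esub> \<in> Units (Rs i)"
  then obtain y where y: "y \<in> carrier (Rs i)" "y \<otimes>\<^bsub>Rs i\<^esub> \<zero>\<^bsub>Rs i\<^esub> = \<one>\<^bsub>Rs i\<^esub>"
    unfolding Units_def by blast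
  then have "\<one>\<^bsub>Rs i\<^esub> = \<zero>\<^bsub>Rs i\<^esub>" by simp
  then show False using Rs_nz[OF i] by simp
qed

lemma tau_c: "r \<in> carrier R \<Longrightarrow> \<tau> r \<in> carrier Q" using ring_hom_closed[OF hom] .

lemma tau_comp_c: "r \<in> carrier R \<Longrightarrow> i < n \<Longrightarrow> \<tau> r i \<in> carrier (Rs i)"
  using tau_c[of r] unfolding prod_ring_carrier by auto

lemma Qext: "x \<in> carrier Q \<Longrightarrow> y \<in> carrier Q \<Longrightarrow> (\<And>i. i < n \<Longrightarrow> x i = y i) \<Longrightarrow> x = y"
  unfolding prod_ring_carrier by (rule PiE_ext) auto

lemma sig_mult: "i < n \<Longrightarrow> a \<in> carrier R \<Longrightarrow> b \<in> carrier R \<Longrightarrow> \<tau> (a \<otimes> b) i = \<tau> a i \<otimes>\<^bsub>Rs i\<^esub> \<tau> b i"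
  using ring_hom_mult[OF hom, of a b] prod_ring_mult[of i "{..<n}"] by simp
lemma sig_add: "i < n \<Longrightarrow> a \<in> carrier R \<Longrightarrow> b \<in> carrier R \<Longrightarrow> \<tau> (a \<oplus> b) i = \<tau> a i \<oplus>\<^bsub>Rs i\<^esub> \<tau> b i"
  using ring_hom_add[OF hom, of a b] prod_ring_add[of i "{..<n}"] by simp
lemma sig_one: "i < n \<Longrightarrow> \<tau> \<one> i = \<one>\<^bsub>Rs i\<^esub>"
  using ring_hom_one[OF hom] prod_ring_one[of i "{..<n}"] by simp

lemma sig_hom: "i < n \<Longrightarrow> (\<lambda>r. \<tau> r i) \<in> ring_hom R (Rs i)"
  by (rule ring_hom_memI) (auto simp: tau_comp_c sig_mult sig_add sig_one)

lemma sig_hom_ring: "i < n \<Longrightarrow> ring_hom_ring R (Rs i) (\<lambda>r. \<tau> r i)"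
  using ring_hom_ringI2[OF Rring ringRs sig_hom] by simp

lemma sig_zero: "i < n \<Longrightarrow> \<tau> \<zero> i = \<zero>\<^bsub>Rs i\<^esub>"
  using ring_hom_zero[OF sig_hom Rring ringRs] by simp

lemma inj0: assumes a: "a \<in> carrier R" and z: "\<And>i. i < n \<Longrightarrow> \<tau> a i = \<zero>\<^bsub>Rs i\<^esub>"
  shows "a = \<zero>"
proof -
  have "\<tau> a = \<zero>\<^bsub>Q\<^esub>"
    by (rule Qext) (auto simp: tau_c a ring.ring_simprules(2)[OF Qring] z prod_ring_zero)
  then show ?thesis using kerT a by simp
qed

lemma inj: assumes a: "a \<in> carrier R" and b: "b \<in> carrier R"
  and e: "\<And>i. i < n \<Longrightarrow> \<tau> a i = \<tau> b i" shows "a = b"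
proof -
  have "a \<oplus> \<ominus> b = \<zero>"
  proof (rule inj0)
    show "a \<oplus> \<ominus> b \<in> carrier R" using a b by simp
    fix i assume i: "i < n"
    interpret h: ring_hom_ring R "Rs i" "\<lambda>r. \<tau> r i" using sig_hom_ring[OF i] .
    have "\<tau> (a \<oplus> \<ominus> b) i = \<tau> a i \<oplus>\<^bsub>Rs i\<^esub> \<ominus>\<^bsub>Rs i\<^esub> \<tau> b i"
      using a b i by (simp add: sig_add h.hom_a_inv)
    also have "\<dots> = \<zero>\<^bsub>Rs i\<^esub>" using e[OF i] tau_comp_c[OF b i]
      by (simp add: abelian_group.r_neg[OF ring.is_abelian_group[OF ringRs[OF i]]])
    finally show "\<tau> (a \<oplus> \<ominus> b) i = \<zero>\<^bsub>Rs i\<^esub>" .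
  qed
  then have "a \<oplus> \<ominus> b \<oplus> b = b" using b by simp
  then show ?thesis using a b by (simp add: a_assoc l_neg)
qed

lemma Units_comp: assumes u: "u \<in> Units Q" and i: "i < n"
  shows "u i \<in> Units (Rs i)" "(inv\<^bsub>Q\<^esub> u) i = inv\<^bsub>Rs i\<^esub> (u i)"
proof -
  interpret Qr: ring Q by (rule Qring)
  interpret Ri: ring "Rs i" using ringRs[OF i] .
  define v where "v = inv\<^bsub>Q\<^esub> u"
  have vc: "v \<in> carrier Q" and uc: "u \<in> carrier Q" using u unfolding v_def by auto
  have "u \<otimes>\<^bsub>Q\<^esub> v = \<one>\<^bsub>Q\<^esub>" "v \<otimes>\<^bsub>Q\<^esub> u = \<one>\<^bsub>Q\<^esub>" using u unfolding v_def by auto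
  then have e: "u i \<otimes>\<^bsub>Rs i\<^esub> v i = \<one>\<^bsub>Rs i\<^esub>" "v i \<otimes>\<^bsub>Rs i\<^esub> u i = \<one>\<^bsub>Rs i\<^esub>"
    using i by (metis lessThan_iff prod_ring_mult prod_ring_one)+
  have c: "u i \<in> carrier (Rs i)" "v i \<in> carrier (Rs i)"
    using uc vc i unfolding prod_ring_carrier by auto
  show "u i \<in> Units (Rs i)" using e c unfolding Units_def by blast
  show "(inv\<^bsub>Q\<^esub> u) i = inv\<^bsub>Rs i\<^esub> (u i)" unfolding v_def[symmetric]
    by (rule Ri.inv_unique'[OF c e])
qed

lemma T_comp_unit: "t \<in> T \<Longrightarrow> i < n \<Longrightarrow> \<tau> t i \<in> Units (Rs i)"
  using Units_comp(1)[OF Tunit] .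

lemma comp_dec: assumes i: "i < n" and q: "q \<in> carrier (Rs i)"
  shows "\<exists>t\<in>T. \<exists>a\<in>carrier R. q = inv\<^bsub>Rs i\<^esub> (\<tau> t i) \<otimes>\<^bsub>Rs i\<^esub> \<tau> a i"
proof -
  interpret Ri: ring "Rs i" using ringRs[OF i] .
  define x where "x = (\<lambda>j\<in>{..<n}. if j = i then q else \<zero>\<^bsub>Rs j\<^esub>)"
  have xc: "x \<in> carrier Q" unfolding x_def prod_ring_carrier
    using q ring.ring_simprules(2)[OF ringRs] by auto
  obtain s r where sr: "s \<in> T" "r \<in> carrier R" "x = inv\<^bsub>Q\<^esub> (\<tau> s) \<otimes>\<^bsub>Q\<^esub> \<tau> r"
    using Qdec[OF xc] by blast
  have "q = x i" unfolding x_def using i by simp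
  also have "\<dots> = (inv\<^bsub>Q\<^esub> (\<tau> s)) i \<otimes>\<^bsub>Rs i\<^esub> \<tau> r i" using sr(3) i prod_ring_mult[of i "{..<n}"] by simp
  also have "\<dots> = inv\<^bsub>Rs i\<^esub> (\<tau> s i) \<otimes>\<^bsub>Rs i\<^esub> \<tau> r i" using Units_comp(2)[OF Tunit[OF sr(1)] i] by simp
  finally show ?thesis using sr by blast
qed

lemma comp_dec2: assumes i: "i < n" and q: "q \<in> carrier (Rs i)"
  shows "\<exists>t\<in>T. \<exists>a\<in>carrier R. \<tau> t i \<otimes>\<^bsub>Rs i\<^esub> q = \<tau> a i"
proof -
  interpret Ri: ring "Rs i" using ringRs[OF i] .
  obtain t a where ta: "t \<in> T" "a \<in> carrier R" "q = inv\<^bsub>Rs i\<^esub> (\<tau> t i) \<otimes>\<^bsub>Rs i\<^esub> \<tau> a i"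
    using comp_dec[OF i q] by blast
  have u: "\<tau> t i \<in> Units (Rs i)" using T_comp_unit[OF ta(1) i] .
  have ac: "\<tau> a i \<in> carrier (Rs i)" using tau_comp_c[OF ta(2) i] .
  have "\<tau> t i \<otimes>\<^bsub>Rs i\<^esub> q = \<tau> t i \<otimes>\<^bsub>Rs i\<^esub> (inv\<^bsub>Rs i\<^esub> (\<tau> t i) \<otimes>\<^bsub>Rs i\<^esub> \<tau> a i)"
    using ta(3) by simp
  also have "\<dots> = (\<tau> t i \<otimes>\<^bsub>Rs i\<^esub> inv\<^bsub>Rs i\<^esub> (\<tau> t i)) \<otimes>\<^bsub>Rs i\<^esub> \<tau> a i"
    by (rule Ri.m_assoc[symmetric, OF Ri.Units_closed[OF u] Ri.Units_inv_closed[OF u] ac])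
  also have "\<dots> = \<tau> a i" using u ac by simp
  finally show ?thesis using ta by blast
qed

lemma Qdec2: "q \<in> carrier Q \<Longrightarrow> \<exists>t\<in>T. \<exists>a\<in>carrier R. \<tau> t \<otimes>\<^bsub>Q\<^esub> q = \<tau> a"
proof -
  interpret Qr: ring Q by (rule Qring)
  assume q: "q \<in> carrier Q"
  obtain s r where sr: "s \<in> T" "r \<in> carrier R" "q = inv\<^bsub>Q\<^esub> (\<tau> s) \<otimes>\<^bsub>Q\<^esub> \<tau> r"
    using Qdec[OF q] by blast
  have u: "\<tau> s \<in> Units Q" using Tunit[OF sr(1)] .
  have "\<tau> s \<otimes>\<^bsub>Q\<^esub> q = \<tau> s \<otimes>\<^bsub>Q\<^esub> (inv\<^bsub>Q\<^esub> (\<tau> s) \<otimes>\<^bsub>Q\<^esub> \<tau> r)"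
    using sr(3) by simp
  also have "\<dots> = (\<tau> s \<otimes>\<^bsub>Q\<^esub> inv\<^bsub>Q\<^esub> (\<tau> s)) \<otimes>\<^bsub>Q\<^esub> \<tau> r"
    by (rule Qr.m_assoc[symmetric, OF Qr.Units_closed[OF u] Qr.Units_inv_closed[OF u] tau_c[OF sr(2)]])
  also have "\<dots> = \<tau> r" using u tau_c[OF sr(2)] by simp
  finally show ?thesis using sr by blast
qed

lemma F5: assumes i: "i < n"
  shows "\<exists>c\<in>carrier R. \<exists>t\<in>T. \<tau> c i = \<tau> t i \<and> (\<forall>j<n. j \<noteq> i \<longrightarrow> \<tau> c j = \<zero>\<^bsub>Rs j\<^esub>)"
proof -
  define e where "e = (\<lambda>j\<in>{..<n}. if j = i then \<one>\<^bsub>Rs j\<^esub> else \<zero>\<^bsub>Rs j\<^esub>)"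
  have ec: "e \<in> carrier Q" unfolding e_def prod_ring_carrier
    using ring.ring_simprules(2,6)[OF ringRs] by auto
  obtain t c where tc: "t \<in> T" "c \<in> carrier R" "\<tau> t \<otimes>\<^bsub>Q\<^esub> e = \<tau> c"
    using Qdec2[OF ec] by blast
  have "\<tau> c j = \<tau> t j \<otimes>\<^bsub>Rs j\<^esub> e j" if "j < n" for j
    using tc(3)[symmetric] that prod_ring_mult[of j "{..<n}"] by simp
  then have 1: "\<tau> c i = \<tau> t i" and 2: "\<forall>j<n. j \<noteq> i \<longrightarrow> \<tau> c j = \<zero>\<^bsub>Rs j\<^esub>"
    using i tau_comp_c[OF subsetD[OF Tc tc(1)]] ringRs unfolding e_def
    by (auto simp: ring.ring_simprules monoid.r_one[OF ring.is_monoid])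
  show ?thesis using 1 2 tc by blast
qed

lemma F7: assumes i: "i < n" and x: "x \<in> carrier R" and z: "\<tau> x i = \<zero>\<^bsub>Rs i\<^esub>"
  shows "\<exists>c\<in>carrier R. \<exists>t\<in>T. \<tau> c i = \<tau> t i \<and> (\<forall>j<n. j \<noteq> i \<longrightarrow> \<tau> c j = \<zero>\<^bsub>Rs j\<^esub>) \<and> c \<otimes> x = \<zero>"
proof -
  obtain c t where ct: "c \<in> carrier R" "t \<in> T" "\<tau> c i = \<tau> t i" "\<forall>j<n. j \<noteq> i \<longrightarrow> \<tau> c j = \<zero>\<^bsub>Rs j\<^esub>"
    using F5[OF i] by blast
  have "c \<otimes> x = \<zero>"
  proof (rule inj0)
    show "c \<otimes> x \<in> carrier R" using ct x by simp
    fix j assume j: "j < n"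
    have "\<tau> (c \<otimes> x) j = \<tau> c j \<otimes>\<^bsub>Rs j\<^esub> \<tau> x j" using sig_mult[OF j ct(1) x] .
    also have "\<dots> = \<zero>\<^bsub>Rs j\<^esub>"
    proof (cases "j = i")
      case True then show ?thesis using z ct(1) tau_comp_c j ringRs[OF j] by (simp add: ring.ring_simprules)
    next
      case False then show ?thesis using ct(4) j tau_comp_c[OF x j] ringRs[OF j] by (simp add: ring.ring_simprules)
    qed
    finally show "\<tau> (c \<otimes> x) j = \<zero>\<^bsub>Rs j\<^esub>" .
  qed
  then show ?thesis using ct by blast
qed

end



context tctx begin

lemma inj': "a \<in> carrier R \<Longrightarrow> b \<in> carrier R \<Longrightarrow> \<tau> a = \<tau> b \<Longrightarrow> a = b"
  by (rule inj) auto

lemma Ti_alt: "r \<in> Ti i \<longleftrightarrow> r \<in> carrier R \<and> \<tau> r i \<in> Units (Rs i)"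
  using tau_c unfolding Ti_def by auto

lemma T_sub_Ti: "i < n \<Longrightarrow> T \<subseteq> Ti i"
  using Tc T_comp_unit Ti_alt by blast

lemma unit_cancel_r: assumes i: "i < n" and u: "u \<in> Units (Rs i)" and x: "x \<in> carrier (Rs i)"
  and z: "x \<otimes>\<^bsub>Rs i\<^esub> u = \<zero>\<^bsub>Rs i\<^esub>" shows "x = \<zero>\<^bsub>Rs i\<^esub>"
proof -
  interpret Ri: ring "Rs i" using ringRs[OF i] .
  have "x = x \<otimes>\<^bsub>Rs i\<^esub> (u \<otimes>\<^bsub>Rs i\<^esub> inv\<^bsub>Rs i\<^esub> u)" using u x by simp
  also have "\<dots> = (x \<otimes>\<^bsub>Rs i\<^esub> u) \<otimes>\<^bsub>Rs i\<^esub> inv\<^bsub>Rs i\<^esub> u"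
    by (rule Ri.m_assoc[symmetric, OF x Ri.Units_closed[OF u] Ri.Units_inv_closed[OF u]])
  also have "\<dots> = \<zero>\<^bsub>Rs i\<^esub>" using z u by simp
  finally show ?thesis .
qed

lemma unit_cancel_l: assumes i: "i < n" and u: "u \<in> Units (Rs i)" and x: "x \<in> carrier (Rs i)"
  and z: "u \<otimes>\<^bsub>Rs i\<^esub> x = \<zero>\<^bsub>Rs i\<^esub>" shows "x = \<zero>\<^bsub>Rs i\<^esub>"
proof -
  interpret Ri: ring "Rs i" using ringRs[OF i] .
  have "x = (inv\<^bsub>Rs i\<^esub> u \<otimes>\<^bsub>Rs i\<^esub> u) \<otimes>\<^bsub>Rs i\<^esub> x" using u x by simp
  also have "\<dots> = inv\<^bsub>Rs i\<^esub> u \<otimes>\<^bsub>Rs i\<^esub> (u \<otimes>\<^bsub>Rs i\<^esub> x)"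
    by (rule Ri.m_assoc[OF Ri.Units_inv_closed[OF u] Ri.Units_closed[OF u] x])
  also have "\<dots> = \<zero>\<^bsub>Rs i\<^esub>" using z u by simp
  finally show ?thesis .
qed

lemma F5_Ti: assumes i: "i < n"
  shows "\<exists>c\<in>Ti i. \<forall>j<n. j \<noteq> i \<longrightarrow> \<tau> c j = \<zero>\<^bsub>Rs j\<^esub>"
proof -
  obtain c t where "c \<in> carrier R" "t \<in> T" "\<tau> c i = \<tau> t i" "\<forall>j<n. j \<noteq> i \<longrightarrow> \<tau> c j = \<zero>\<^bsub>Rs j\<^esub>"
    using F5[OF i] by blast
  then show ?thesis using T_comp_unit[OF _ i] Ti_alt by metis
qed

lemma Ti_den: assumes i: "i < n" shows "Ti i \<in> Den_l R"
proof -
  interpret Ri: ring "Rs i" using ringRs[OF i] .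
  interpret Qr: ring Q by (rule Qring)
  have ms: "mult_subset R (Ti i)" unfolding mult_subset_def
  proof (intro conjI ballI)
    show "Ti i \<subseteq> carrier R" using Ti_alt by blast
    show "\<one> \<in> Ti i" using Ti_alt sig_one[OF i] by simp
    show "\<zero> \<notin> Ti i" using Ti_alt sig_zero[OF i] zero_nonunit[OF i] by simp
    fix s t assume "s \<in> Ti i" "t \<in> Ti i"
    then show "s \<otimes> t \<in> Ti i" using Ti_alt sig_mult[OF i] by simp
  qed
  have ore: "\<forall>r\<in>carrier R. \<forall>s\<in>Ti i. \<exists>s'\<in>Ti i. \<exists>r'\<in>carrier R. s' \<otimes> r = r' \<otimes> s"
  proof (intro ballI)
    fix r s assume r: "r \<in> carrier R" and s: "s \<in> Ti i"
    have sc: "s \<in> carrier R" and u: "\<tau> s i \<in> Units (Rs i)" using s Ti_alt by auto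
    obtain c t3 where ct: "c \<in> carrier R" "t3 \<in> T" "\<tau> c i = \<tau> t3 i"
      "\<forall>j<n. j \<noteq> i \<longrightarrow> \<tau> c j = \<zero>\<^bsub>Rs j\<^esub>"
      using F5[OF i] by blast
    have cr: "c \<otimes> r \<in> carrier R" using ct r by simp
    define y where "y = (\<lambda>j\<in>{..<n}. if j = i then \<tau> (c \<otimes> r) i \<otimes>\<^bsub>Rs i\<^esub> inv\<^bsub>Rs i\<^esub> (\<tau> s i) else \<zero>\<^bsub>Rs j\<^esub>)"
    have yc: "y \<in> carrier Q" unfolding y_def prod_ring_carrier
      using ring.ring_simprules(2)[OF ringRs] tau_comp_c[OF cr i] u by auto
    have ys: "y \<otimes>\<^bsub>Q\<^esub> \<tau> s = \<tau> (c \<otimes> r)"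
    proof (rule Qext)
      show "y \<otimes>\<^bsub>Q\<^esub> \<tau> s \<in> carrier Q" using yc tau_c[OF sc] by simp
      show "\<tau> (c \<otimes> r) \<in> carrier Q" using tau_c[OF cr] .
      fix j assume j: "j < n"
      have "(y \<otimes>\<^bsub>Q\<^esub> \<tau> s) j = y j \<otimes>\<^bsub>Rs j\<^esub> \<tau> s j" using j prod_ring_mult[of j "{..<n}"] by simp
      also have "\<dots> = \<tau> (c \<otimes> r) j"
      proof (cases "j = i")
        case True
        have "y j \<otimes>\<^bsub>Rs j\<^esub> \<tau> s j = (\<tau> (c \<otimes> r) i \<otimes>\<^bsub>Rs i\<^esub> inv\<^bsub>Rs i\<^esub> (\<tau> s i)) \<otimes>\<^bsub>Rs i\<^esub> \<tau> s i"
          using True i unfolding y_def by simp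
        also have "\<dots> = \<tau> (c \<otimes> r) i \<otimes>\<^bsub>Rs i\<^esub> (inv\<^bsub>Rs i\<^esub> (\<tau> s i) \<otimes>\<^bsub>Rs i\<^esub> \<tau> s i)"
          by (rule Ri.m_assoc[OF tau_comp_c[OF cr i] Ri.Units_inv_closed[OF u] Ri.Units_closed[OF u]])
        also have "\<dots> = \<tau> (c \<otimes> r) i" using u tau_comp_c[OF cr i] by simp
        finally show ?thesis using True by simp
      next
        case False
        interpret Rj: ring "Rs j" using ringRs[OF j] .
        have "y j \<otimes>\<^bsub>Rs j\<^esub> \<tau> s j = \<zero>\<^bsub>Rs j\<^esub>" using False j tau_comp_c[OF sc j] unfolding y_def by simp
        also have "\<dots> = \<tau> (c \<otimes> r) j" using sig_mult[OF j ct(1) r] ct(4) False j tau_comp_c[OF r j] by simp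
        finally show ?thesis .
      qed
      finally show "(y \<otimes>\<^bsub>Q\<^esub> \<tau> s) j = \<tau> (c \<otimes> r) j" .
    qed
    obtain t2 b where tb: "t2 \<in> T" "b \<in> carrier R" "\<tau> t2 \<otimes>\<^bsub>Q\<^esub> y = \<tau> b"
      using Qdec2[OF yc] by blast
    have t2c: "t2 \<in> carrier R" using tb(1) Tc by blast
    have "\<tau> ((t2 \<otimes> c) \<otimes> r) = \<tau> t2 \<otimes>\<^bsub>Q\<^esub> \<tau> (c \<otimes> r)"
      using t2c ct(1) r ring_hom_mult[OF hom] by (simp add: m_assoc)
    also have "\<dots> = \<tau> t2 \<otimes>\<^bsub>Q\<^esub> (y \<otimes>\<^bsub>Q\<^esub> \<tau> s)" using ys by simp
    also have "\<dots> = (\<tau> t2 \<otimes>\<^bsub>Q\<^esub> y) \<otimes>\<^bsub>Q\<^esub> \<tau> s"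
      by (rule Qr.m_assoc[symmetric, OF tau_c[OF t2c] yc tau_c[OF sc]])
    also have "\<dots> = \<tau> (b \<otimes> s)" using tb(3) ring_hom_mult[OF hom tb(2) sc] by simp
    finally have "(t2 \<otimes> c) \<otimes> r = b \<otimes> s"
      using inj' t2c ct(1) r tb(2) sc by simp
    moreover have "t2 \<otimes> c \<in> Ti i"
      using Ti_alt sig_mult[OF i t2c ct(1)] ct(3) T_comp_unit[OF tb(1) i] T_comp_unit[OF ct(2) i] t2c ct(1)
      by simp
    ultimately show "\<exists>s'\<in>Ti i. \<exists>r'\<in>carrier R. s' \<otimes> r = r' \<otimes> s" using tb(2) by blast
  qed
  have den: "\<forall>r\<in>carrier R. \<forall>s\<in>Ti i. r \<otimes> s = \<zero> \<longrightarrow> (\<exists>t\<in>Ti i. t \<otimes> r = \<zero>)"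
  proof (intro ballI impI)
    fix r s assume r: "r \<in> carrier R" and s: "s \<in> Ti i" and z: "r \<otimes> s = \<zero>"
    have sc: "s \<in> carrier R" and u: "\<tau> s i \<in> Units (Rs i)" using s Ti_alt by auto
    have "\<tau> r i \<otimes>\<^bsub>Rs i\<^esub> \<tau> s i = \<zero>\<^bsub>Rs i\<^esub>" using sig_mult[OF i r sc] z sig_zero[OF i] by simp
    then have "\<tau> r i = \<zero>\<^bsub>Rs i\<^esub>" using unit_cancel_r[OF i u tau_comp_c[OF r i]] by simp
    then obtain c t where ct: "c \<in> carrier R" "t \<in> T" "\<tau> c i = \<tau> t i" "c \<otimes> r = \<zero>"
      using F7[OF i r] by blast
    then have "c \<in> Ti i" using Ti_alt T_comp_unit[OF ct(2) i] by simp
    then show "\<exists>t\<in>Ti i. t \<otimes> r = \<zero>" using ct by blast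
  qed
  show ?thesis unfolding Den_l_def left_den_def left_ore_def using ms ore den by blast
qed

lemma Ti_loc: assumes i: "i < n" shows "is_left_loc R (Ti i) (Rs i) (\<lambda>r. \<tau> r i)"
  unfolding is_left_loc_def
proof (intro conjI ballI)
  interpret Ri: ring "Rs i" using ringRs[OF i] .
  show "ring (Rs i)" by (rule ringRs[OF i])
  show "(\<lambda>r. \<tau> r i) \<in> ring_hom R (Rs i)" by (rule sig_hom[OF i])
  show "(\<lambda>r. \<tau> r i) ` Ti i \<subseteq> Units (Rs i)" using Ti_alt by auto
  fix q assume q: "q \<in> carrier (Rs i)"
  then show "\<exists>s\<in>Ti i. \<exists>r\<in>carrier R. q = inv\<^bsub>Rs i\<^esub> (\<tau> s i) \<otimes>\<^bsub>Rs i\<^esub> \<tau> r i"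
    using comp_dec[OF i q] T_sub_Ti[OF i] by blast
next
  fix r assume r: "r \<in> carrier R"
  show "(\<tau> r i = \<zero>\<^bsub>Rs i\<^esub>) = (r \<in> ass R (Ti i))"
  proof
    assume "\<tau> r i = \<zero>\<^bsub>Rs i\<^esub>"
    then obtain c t where ct: "c \<in> carrier R" "t \<in> T" "\<tau> c i = \<tau> t i" "c \<otimes> r = \<zero>"
      using F7[OF i r] by blast
    then have "c \<in> Ti i" using Ti_alt T_comp_unit[OF ct(2) i] by simp
    then show "r \<in> ass R (Ti i)" unfolding ass_def using r ct by blast
  next
    assume "r \<in> ass R (Ti i)"
    then obtain s where s: "s \<in> Ti i" "s \<otimes> r = \<zero>" unfolding ass_def by blast
    have sc: "s \<in> carrier R" and u: "\<tau> s i \<in> Units (Rs i)" using s Ti_alt by auto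
    have "\<tau> s i \<otimes>\<^bsub>Rs i\<^esub> \<tau> r i = \<zero>\<^bsub>Rs i\<^esub>" using sig_mult[OF i sc r] s sig_zero[OF i] by simp
    then show "\<tau> r i = \<zero>\<^bsub>Rs i\<^esub>" using unit_cancel_l[OF i u tau_comp_c[OF r i]] by simp
  qed
qed

end



context tctx begin

lemma DenD:
  assumes "S \<in> Den_l R"
  shows "S \<subseteq> carrier R" "\<one> \<in> S" "\<zero> \<notin> S" "\<And>s t. s \<in> S \<Longrightarrow> t \<in> S \<Longrightarrow> s \<otimes> t \<in> S"
    "\<And>r s. r \<in> carrier R \<Longrightarrow> s \<in> S \<Longrightarrow> \<exists>s'\<in>S. \<exists>r'\<in>carrier R. s' \<otimes> r = r' \<otimes> s"
    "\<And>r s. r \<in> carrier R \<Longrightarrow> s \<in> S \<Longrightarrow> r \<otimes> s = \<zero> \<Longrightarrow> \<exists>t\<in>S. t \<otimes> r = \<zero>"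
  using assms unfolding Den_l_def left_den_def left_ore_def mult_subset_def by blast+

lemma Mgen_den: assumes S: "S \<in> Den_l R" shows "mgen R (S \<union> T) \<in> Den_l R"
proof -
  note SD = DenD[OF S] and TDD = DenD[OF TD]
  have G: "S \<union> T \<subseteq> carrier R" using SD(1) Tc by blast
  let ?M = "mgen R (S \<union> T)"
  have Mc: "?M \<subseteq> carrier R" using mgen_carrier[OF G] .
  have SM: "S \<union> T \<subseteq> ?M" using mgen_gen[OF G] .
  have genS: "\<forall>g\<in>S \<union> T. \<forall>r\<in>carrier R. r \<otimes> g = \<zero> \<longrightarrow> (\<exists>w\<in>S. w \<otimes> r = \<zero>)"
  proof (intro ballI impI)
    fix g r assume g: "g \<in> S \<union> T" and r: "r \<in> carrier R" and z: "r \<otimes> g = \<zero>"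
    show "\<exists>w\<in>S. w \<otimes> r = \<zero>"
    proof (cases "g \<in> S")
      case True then show ?thesis using SD(6)[OF r _ z] by blast
    next
      case False
      then have "g \<in> T" using g by blast
      then obtain t where "t \<in> T" "t \<otimes> r = \<zero>" using TDD(6)[OF r _ z] by blast
      then have "r \<in> ass R T" unfolding ass_def using r by blast
      then have "r = \<zero>" using assT by blast
      then have "\<one> \<otimes> r = \<zero>" by simp
      then show ?thesis using SD(2) by blast
    qed
  qed
  have dS: "\<forall>r\<in>carrier R. r \<otimes> p = \<zero> \<longrightarrow> (\<exists>w\<in>S. w \<otimes> r = \<zero>)" if "p \<in> ?M" for p
    by (rule mgen_den[OF G SD(1) _ SD(2) genS that]) (use SD(4) in blast)
  have z: "\<zero> \<notin> ?M"
  proof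
    assume "\<zero> \<in> ?M"
    then obtain w where "w \<in> S" "w \<otimes> \<one> = \<zero>" using dS[of \<zero>] by auto
    then show False using SD(1,3) by auto
  qed
  have genO: "\<forall>g\<in>S \<union> T. \<forall>r\<in>carrier R. \<exists>s'\<in>?M. \<exists>r'\<in>carrier R. s' \<otimes> r = r' \<otimes> g"
  proof (intro ballI)
    fix g r assume g: "g \<in> S \<union> T" and r: "r \<in> carrier R"
    show "\<exists>s'\<in>?M. \<exists>r'\<in>carrier R. s' \<otimes> r = r' \<otimes> g"
    proof (cases "g \<in> S")
      case True then show ?thesis using SD(5)[OF r True] SM by blast
    next
      case False
      then have "g \<in> T" using g by blast
      then show ?thesis using TDD(5)[OF r] SM by blast
    qed
  qed
  have "left_den R ?M"
    unfolding left_den_def left_ore_def mult_subset_def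
  proof (intro conjI)
    show "?M \<subseteq> carrier R" by (rule Mc)
    show "\<one> \<in> ?M" by (rule mg_one)
    show "\<zero> \<notin> ?M" by (rule z)
    show "\<forall>s\<in>?M. \<forall>t\<in>?M. s \<otimes> t \<in> ?M" using mgen_mult[OF G] by blast
    show "\<forall>r\<in>carrier R. \<forall>s\<in>?M. \<exists>s'\<in>?M. \<exists>r'\<in>carrier R. s' \<otimes> r = r' \<otimes> s"
      using mgen_ore[OF G genO] by blast
    show "\<forall>r\<in>carrier R. \<forall>s\<in>?M. r \<otimes> s = \<zero> \<longrightarrow> (\<exists>t\<in>?M. t \<otimes> r = \<zero>)"
      using dS SM by blast
  qed
  then show ?thesis unfolding Den_l_def by simp
qed

lemma some_nonzero: assumes S: "S \<in> Den_l R" shows "\<exists>i<n. \<forall>s\<in>S. \<tau> s i \<noteq> \<zero>\<^bsub>Rs i\<^esub>"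
proof (rule ccontr)
  note SD = DenD[OF S]
  assume "\<not> ?thesis"
  then have all: "\<forall>i<n. \<exists>s\<in>S. \<tau> s i = \<zero>\<^bsub>Rs i\<^esub>" by blast
  have "k \<le> n \<Longrightarrow> \<exists>p\<in>S. \<forall>i<k. \<tau> p i = \<zero>\<^bsub>Rs i\<^esub>" for k
  proof (induct k)
    case 0 then show ?case using SD(2) by blast
  next
    case (Suc k)
    then obtain p where p: "p \<in> S" "\<forall>i<k. \<tau> p i = \<zero>\<^bsub>Rs i\<^esub>" by auto
    have kn: "k < n" using Suc(2) by simp
    obtain s where s: "s \<in> S" "\<tau> s k = \<zero>\<^bsub>Rs k\<^esub>" using all kn by blast
    have pc: "p \<in> carrier R" and sc: "s \<in> carrier R" using p s SD(1) by auto
    have "\<forall>i<Suc k. \<tau> (p \<otimes> s) i = \<zero>\<^bsub>Rs i\<^esub>"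
    proof (intro allI impI)
      fix i assume i: "i < Suc k"
      then have iN: "i < n" using Suc(2) by simp
      interpret Ri: ring "Rs i" using ringRs[OF iN] .
      have "\<tau> (p \<otimes> s) i = \<tau> p i \<otimes>\<^bsub>Rs i\<^esub> \<tau> s i" using sig_mult[OF iN pc sc] .
      moreover have "\<tau> p i = \<zero>\<^bsub>Rs i\<^esub> \<or> \<tau> s i = \<zero>\<^bsub>Rs i\<^esub>"
      proof (cases "i < k")
        case True then show ?thesis using p(2) by blast
      next
        case False then have "i = k" using i by simp
        then show ?thesis using s(2) by simp
      qed
      ultimately show "\<tau> (p \<otimes> s) i = \<zero>\<^bsub>Rs i\<^esub>"
        using tau_comp_c[OF pc iN] tau_comp_c[OF sc iN] by auto
    qed
    then show ?case using SD(4)[OF p(1) s(1)] by blast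
  qed
  then obtain p where "p \<in> S" "\<forall>i<n. \<tau> p i = \<zero>\<^bsub>Rs i\<^esub>" by blast
  then have "p = \<zero>" using inj0 SD(1) by blast
  then show False using \<open>p \<in> S\<close> SD(3) by blast
qed

lemma D_units: assumes S: "S \<in> Den_l R" and TS: "T \<subseteq> S" and i: "i < n"
  and nz: "\<forall>s\<in>S. \<tau> s i \<noteq> \<zero>\<^bsub>Rs i\<^esub>"
  shows "S \<subseteq> Ti i"
proof -
  note SD = DenD[OF S]
  interpret Ri: ring "Rs i" using ringRs[OF i] .
  define D where "D = (\<lambda>s. \<tau> s i) ` S"
  have Dc: "D \<subseteq> carrier (Rs i)"
  proof
    fix x assume "x \<in> D"
    then obtain s where s: "s \<in> S" "x = \<tau> s i" unfolding D_def by blast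
    show "x \<in> carrier (Rs i)" using s(2) tau_comp_c[OF subsetD[OF SD(1) s(1)] i] by simp
  qed
  have ms: "mult_subset (Rs i) D" unfolding mult_subset_def
  proof (intro conjI ballI)
    show "D \<subseteq> carrier (Rs i)" by (rule Dc)
    have "\<tau> \<one> i \<in> D" unfolding D_def using SD(2) by (rule imageI)
    then show "\<one>\<^bsub>Rs i\<^esub> \<in> D" using sig_one[OF i] by simp
    show "\<zero>\<^bsub>Rs i\<^esub> \<notin> D" unfolding D_def using nz by auto
    fix x y assume "x \<in> D" "y \<in> D"
    then obtain s t where st: "s \<in> S" "t \<in> S" "x = \<tau> s i" "y = \<tau> t i" unfolding D_def by blast
    have "x \<otimes>\<^bsub>Rs i\<^esub> y = \<tau> (s \<otimes> t) i"
      using st(3,4) sig_mult[OF i subsetD[OF SD(1) st(1)] subsetD[OF SD(1) st(2)]] by simp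
    moreover have "s \<otimes> t \<in> S" using SD(4) st by blast
    ultimately show "x \<otimes>\<^bsub>Rs i\<^esub> y \<in> D" unfolding D_def by blast
  qed
  have ore: "\<forall>x\<in>carrier (Rs i). \<forall>d\<in>D. \<exists>d'\<in>D. \<exists>x'\<in>carrier (Rs i). d' \<otimes>\<^bsub>Rs i\<^esub> x = x' \<otimes>\<^bsub>Rs i\<^esub> d"
  proof (intro ballI)
    fix x d assume x: "x \<in> carrier (Rs i)" and d: "d \<in> D"
    then obtain s where s: "s \<in> S" "d = \<tau> s i" unfolding D_def by blast
    have sc: "s \<in> carrier R" using s SD(1) by blast
    obtain t a where ta: "t \<in> T" "a \<in> carrier R" "\<tau> t i \<otimes>\<^bsub>Rs i\<^esub> x = \<tau> a i"
      using comp_dec2[OF i x] by blast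
    have tc: "t \<in> carrier R" using ta Tc by blast
    obtain s' a' where sa: "s' \<in> S" "a' \<in> carrier R" "s' \<otimes> a = a' \<otimes> s"
      using SD(5)[OF ta(2) s(1)] by blast
    have s'c: "s' \<in> carrier R" using sa SD(1) by blast
    have "\<tau> (s' \<otimes> t) i \<otimes>\<^bsub>Rs i\<^esub> x = (\<tau> s' i \<otimes>\<^bsub>Rs i\<^esub> \<tau> t i) \<otimes>\<^bsub>Rs i\<^esub> x"
      using sig_mult[OF i s'c tc] by simp
    also have "\<dots> = \<tau> s' i \<otimes>\<^bsub>Rs i\<^esub> (\<tau> t i \<otimes>\<^bsub>Rs i\<^esub> x)"
      by (rule Ri.m_assoc[OF tau_comp_c[OF s'c i] tau_comp_c[OF tc i] x])
    also have "\<dots> = \<tau> (s' \<otimes> a) i" using ta(3) sig_mult[OF i s'c ta(2)] by simp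
    also have "\<dots> = \<tau> a' i \<otimes>\<^bsub>Rs i\<^esub> d" using sa(3) sig_mult[OF i sa(2) sc] s(2) by simp
    finally have "\<tau> (s' \<otimes> t) i \<otimes>\<^bsub>Rs i\<^esub> x = \<tau> a' i \<otimes>\<^bsub>Rs i\<^esub> d" .
    moreover have "\<tau> (s' \<otimes> t) i \<in> D" unfolding D_def using SD(4)[OF sa(1)] TS ta(1) by blast
    moreover have "\<tau> a' i \<in> carrier (Rs i)" using tau_comp_c[OF sa(2) i] .
    ultimately show "\<exists>d'\<in>D. \<exists>x'\<in>carrier (Rs i). d' \<otimes>\<^bsub>Rs i\<^esub> x = x' \<otimes>\<^bsub>Rs i\<^esub> d" by blast
  qed
  have den: "\<forall>x\<in>carrier (Rs i). \<forall>d\<in>D. x \<otimes>\<^bsub>Rs i\<^esub> d = \<zero>\<^bsub>Rs i\<^esub> \<longrightarrow> (\<exists>d'\<in>D. d' \<otimes>\<^bsub>Rs i\<^esub> x = \<zero>\<^bsub>Rs i\<^esub>)"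
  proof (intro ballI impI)
    fix x d assume x: "x \<in> carrier (Rs i)" and d: "d \<in> D" and z: "x \<otimes>\<^bsub>Rs i\<^esub> d = \<zero>\<^bsub>Rs i\<^esub>"
    then obtain s where s: "s \<in> S" "d = \<tau> s i" unfolding D_def by blast
    have sc: "s \<in> carrier R" using s SD(1) by blast
    obtain t a where ta: "t \<in> T" "a \<in> carrier R" "\<tau> t i \<otimes>\<^bsub>Rs i\<^esub> x = \<tau> a i"
      using comp_dec2[OF i x] by blast
    have tc: "t \<in> carrier R" using ta Tc by blast
    have "\<tau> (a \<otimes> s) i = \<tau> a i \<otimes>\<^bsub>Rs i\<^esub> \<tau> s i" using sig_mult[OF i ta(2) sc] .
    also have "\<dots> = (\<tau> t i \<otimes>\<^bsub>Rs i\<^esub> x) \<otimes>\<^bsub>Rs i\<^esub> d" using ta(3) s(2) by simp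
    also have "\<dots> = \<tau> t i \<otimes>\<^bsub>Rs i\<^esub> (x \<otimes>\<^bsub>Rs i\<^esub> d)"
      by (rule Ri.m_assoc[OF tau_comp_c[OF tc i] x subsetD[OF Dc d]])
    also have "\<dots> = \<zero>\<^bsub>Rs i\<^esub>" using z tau_comp_c[OF tc i] by simp
    finally have "\<tau> (a \<otimes> s) i = \<zero>\<^bsub>Rs i\<^esub>" .
    moreover have "a \<otimes> s \<in> carrier R" using ta(2) sc by simp
    ultimately obtain c t3 where ct: "c \<in> carrier R" "t3 \<in> T" "\<tau> c i = \<tau> t3 i" "c \<otimes> (a \<otimes> s) = \<zero>"
      using F7[OF i] by blast
    have "(c \<otimes> a) \<otimes> s = \<zero>" using ct ta(2) sc by (simp add: m_assoc)
    then obtain s'' where s'': "s'' \<in> S" "s'' \<otimes> (c \<otimes> a) = \<zero>"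
      using SD(6)[OF _ s(1)] ct(1) ta(2) by blast
    have s''c: "s'' \<in> carrier R" using s'' SD(1) by blast
    have t3c: "t3 \<in> carrier R" using ct Tc by blast
    have "\<tau> ((s'' \<otimes> t3) \<otimes> t) i \<otimes>\<^bsub>Rs i\<^esub> x = ((\<tau> s'' i \<otimes>\<^bsub>Rs i\<^esub> \<tau> t3 i) \<otimes>\<^bsub>Rs i\<^esub> \<tau> t i) \<otimes>\<^bsub>Rs i\<^esub> x"
      using sig_mult[OF i] s''c t3c tc by simp
    also have "\<dots> = (\<tau> s'' i \<otimes>\<^bsub>Rs i\<^esub> \<tau> c i) \<otimes>\<^bsub>Rs i\<^esub> (\<tau> t i \<otimes>\<^bsub>Rs i\<^esub> x)"
      using ct(3) tau_comp_c[OF s''c i] tau_comp_c[OF t3c i] tau_comp_c[OF tc i] x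
      by (simp add: Ri.m_assoc)
    also have "\<dots> = (\<tau> s'' i \<otimes>\<^bsub>Rs i\<^esub> \<tau> c i) \<otimes>\<^bsub>Rs i\<^esub> \<tau> a i" using ta(3) by simp
    also have "\<dots> = \<tau> (s'' \<otimes> (c \<otimes> a)) i"
      using sig_mult[OF i] s''c ct(1) ta(2) tau_comp_c[OF s''c i] tau_comp_c[OF ct(1) i] tau_comp_c[OF ta(2) i]
      by (simp add: Ri.m_assoc)
    also have "\<dots> = \<zero>\<^bsub>Rs i\<^esub>" using s''(2) sig_zero[OF i] by simp
    finally have "\<tau> ((s'' \<otimes> t3) \<otimes> t) i \<otimes>\<^bsub>Rs i\<^esub> x = \<zero>\<^bsub>Rs i\<^esub>" .
    moreover have "(s'' \<otimes> t3) \<otimes> t \<in> S" using SD(4) s''(1) TS ct(2) ta(1) by blast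
    ultimately show "\<exists>d'\<in>D. d' \<otimes>\<^bsub>Rs i\<^esub> x = \<zero>\<^bsub>Rs i\<^esub>" unfolding D_def by blast
  qed
  have lo: "left_ore (Rs i) D" unfolding left_ore_def using ms ore by (rule conjI)
  have DD: "D \<in> Den_l (Rs i)" unfolding Den_l_def left_den_def using lo den by simp
  have eq: "{ass (Rs i) S | S. S \<in> Den_l (Rs i)} = {{\<zero>\<^bsub>Rs i\<^esub>}}"
    using Rmax i unfolding left_loc_max_ring_def by blast
  have "ass (Rs i) D \<in> {ass (Rs i) S | S. S \<in> Den_l (Rs i)}" using DD by blast
  then have assD: "ass (Rs i) D = {\<zero>\<^bsub>Rs i\<^esub>}" unfolding eq by simp
  have reg: "D \<subseteq> regular_elems (Rs i)"
  proof
    fix d assume d: "d \<in> D"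
    show "d \<in> regular_elems (Rs i)"
    proof (rule Ri.regular_elemsI)
      show "d \<in> carrier (Rs i)" using d Dc by blast
      fix c assume c: "c \<in> carrier (Rs i)"
      { assume "d \<otimes>\<^bsub>Rs i\<^esub> c = \<zero>\<^bsub>Rs i\<^esub>"
        then have "c \<in> ass (Rs i) D" unfolding ass_def using c d by blast
        then show "c = \<zero>\<^bsub>Rs i\<^esub>" using assD by blast }
      { assume "c \<otimes>\<^bsub>Rs i\<^esub> d = \<zero>\<^bsub>Rs i\<^esub>"
        then obtain d' where "d' \<in> D" "d' \<otimes>\<^bsub>Rs i\<^esub> c = \<zero>\<^bsub>Rs i\<^esub>" using den c d by blast
        then have "c \<in> ass (Rs i) D" unfolding ass_def using c by blast
        then show "c = \<zero>\<^bsub>Rs i\<^esub>" using assD by blast }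
    qed
  qed
  have "D \<subseteq> S0 (Rs i)" by (rule Ri.S0_largest[OF lo reg])
  also have "\<dots> \<subseteq> Units (Rs i)" using Rmax i unfolding left_loc_max_ring_def by blast
  finally have DU: "D \<subseteq> Units (Rs i)" .
  show ?thesis
  proof
    fix s assume s: "s \<in> S"
    then have "\<tau> s i \<in> D" unfolding D_def by (rule imageI)
    then have "\<tau> s i \<in> Units (Rs i)" using DU by blast
    then show "s \<in> Ti i" using Ti_alt s SD(1) by blast
  qed
qed

lemma maxDen_eq: "maxDen_l R = Ti ` {..<n}"
proof
  show "Ti ` {..<n} \<subseteq> maxDen_l R"
  proof
    fix X assume "X \<in> Ti ` {..<n}"
    then obtain i where i: "i < n" "X = Ti i" by blast
    have "\<forall>S'\<in>Den_l R. Ti i \<subseteq> S' \<longrightarrow> S' = Ti i"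
    proof (intro ballI impI)
      fix S' assume S': "S' \<in> Den_l R" and sub: "Ti i \<subseteq> S'"
      have TS: "T \<subseteq> S'" using T_sub_Ti[OF i(1)] sub by blast
      obtain j where j: "j < n" "\<forall>s\<in>S'. \<tau> s j \<noteq> \<zero>\<^bsub>Rs j\<^esub>" using some_nonzero[OF S'] by blast
      have "j = i"
      proof (rule ccontr)
        assume "j \<noteq> i"
        obtain c where "c \<in> Ti i" "\<forall>k<n. k \<noteq> i \<longrightarrow> \<tau> c k = \<zero>\<^bsub>Rs k\<^esub>" using F5_Ti[OF i(1)] by blast
        then show False using j sub \<open>j \<noteq> i\<close> by blast
      qed
      then have "S' \<subseteq> Ti i" using D_units[OF S' TS j(1) j(2)] by simp
      then show "S' = Ti i" using sub by blast
    qed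
    then show "X \<in> maxDen_l R" unfolding maxDen_l_def using Ti_den[OF i(1)] i(2) by blast
  qed
next
  show "maxDen_l R \<subseteq> Ti ` {..<n}"
  proof
    fix S assume "S \<in> maxDen_l R"
    then have S: "S \<in> Den_l R" and mx: "\<forall>S'\<in>Den_l R. S \<subseteq> S' \<longrightarrow> S' = S"
      unfolding maxDen_l_def by blast+
    have G: "S \<union> T \<subseteq> carrier R" using DenD(1)[OF S] Tc by blast
    have "S \<union> T \<subseteq> mgen R (S \<union> T)" using mgen_gen[OF G] .
    then have "mgen R (S \<union> T) = S" using mx Mgen_den[OF S] by blast
    then have TS: "T \<subseteq> S" using \<open>S \<union> T \<subseteq> mgen R (S \<union> T)\<close> by blast
    obtain j where j: "j < n" "\<forall>s\<in>S. \<tau> s j \<noteq> \<zero>\<^bsub>Rs j\<^esub>" using some_nonzero[OF S] by blast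
    have "S \<subseteq> Ti j" using D_units[OF S TS j(1) j(2)] .
    then have "Ti j = S" using mx Ti_den[OF j(1)] by blast
    then show "S \<in> Ti ` {..<n}" using j(1) by blast
  qed
qed

end


theorem theorem3p12:
  fixes R :: "('a, 'm) ring_scheme" and T :: "'a set" and n :: nat
    and Rs :: "nat \<Rightarrow> ('b, 'k) ring_scheme" and \<tau> :: "'a \<Rightarrow> nat \<Rightarrow> 'b"
  assumes "ring R"
    and "T \<in> Den_l R"
    and "ass R T = {\<zero>\<^bsub>R\<^esub>}"
    and "\<forall>i<n. left_loc_max_ring (Rs i)"
    and "is_left_loc R T (prod_ring {..<n} Rs) \<tau>"
  shows "maxDen_l R =
           (\<lambda>i. {r \<in> carrier R. \<tau> r \<in> {x \<in> carrier (prod_ring {..<n} Rs). x i \<in> Units (Rs i)}})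
             ` {..<n}
       \<and> (\<forall>i<n. \<exists>\<sigma>. is_left_loc R
              {r \<in> carrier R. \<tau> r \<in> {x \<in> carrier (prod_ring {..<n} Rs). x i \<in> Units (Rs i)}}
              (Rs i) \<sigma>)"
proof -
  interpret C: tctx R T n Rs \<tau>
    unfolding tctx_def using assms by blast
  have Tieq: "C.Ti = (\<lambda>i. {r \<in> carrier R. \<tau> r \<in> {x \<in> carrier (prod_ring {..<n} Rs). x i \<in> Units (Rs i)}})"
    by (rule ext) (simp only: C.Ti_def)
  show ?thesis using C.maxDen_eq C.Ti_loc unfolding Tieq by blast
qed

end
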